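(* Let $K\subset\mathbb{R}^{n+m}$ be a convex body. For every $u\in W$ and every $y\in(\Sigma_\pi K)^u$ there is a measurable section $\gamma$ with $\int_{\pi(K)}\gamma(x)\,\mathrm{d}x=y$ and $\gamma(x)\in (K_x)^u$ for every $x\in\pi(K)$. Consequently $$(\Sigma_\pi K)^u=\Big\{\int_{\pi(K)}\gamma(x)\,\mathrm{d}x : \gamma \text{ measurable section with } \gamma(x)\in (K_x)^u \text{ for all } x\in\pi(K)\Big\}.$$
   Context: A convex body is a non-empty compact convex subset of a real vector space; its support function is $h_L(u)=\max\{\langle u,x\rangle : x\in L\}$, and its face in direction $u$ is $L^u:=\{y\in L:\langle u,y\rangle=h_L(u)\}$. Let $V\subset\mathbb{R}^{n+m}$ be a linear subspace of dimension $n$, $W=V^\perp$, $\pi:\mathbb{R}^{n+m}\to V$ the orthogonal projection. For $x\in\pi(K)$ let $K_x:=\{y\in W : x+y\in K\}$. A section is a map $\gamma:\pi(K)\to W$ with $\gamma(x)\in K_x$ for all $x$; measurable means Borel measurable. The fiber body is $\Sigma_\pi K:=\{\int_{\pi(K)}\gamma(x)\,\mathrm{d}x : \gamma \text{ measurable section}\}\subset W$, with $\mathrm{d}x$ Lebesgue measure on $V$. *)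

theory Defs
  imports "HOL-Analysis.Analysis"
begin

definition support_fun :: "'a::real_inner set \<Rightarrow> 'a \<Rightarrow> real" where
  "support_fun L u = (SUP x\<in>L. inner u x)"

definition face :: "'a::real_inner set \<Rightarrow> 'a \<Rightarrow> 'a set" where
  "face L u = {y \<in> L. inner u y = support_fun L u}"

definition proj :: "'a::euclidean_space set \<Rightarrow> 'a \<Rightarrow> 'a" where
  "proj V z = (THE v. v \<in> V \<and> z - v \<in> orthogonal_comp V)"

definition fiber :: "'a::euclidean_space set \<Rightarrow> 'a set \<Rightarrow> 'a \<Rightarrow> 'a set" where
  "fiber K V x = {y \<in> orthogonal_comp V. x + y \<in> K}"

text \<open>Lebesgue measure on the subspace V = range L, transported from the
  Lebesgue measure of 'v via a linear isometry L onto V.\<close>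
definition lebesgue_sub :: "('v::euclidean_space \<Rightarrow> 'a::euclidean_space) \<Rightarrow> 'a measure" where
  "lebesgue_sub L = distr lborel borel L"

definition meas_section :: "'a::euclidean_space set \<Rightarrow> 'a set \<Rightarrow> ('a \<Rightarrow> 'a) \<Rightarrow> bool" where
  "meas_section K V \<gamma> \<longleftrightarrow>
     (\<forall>x \<in> proj V ` K. \<gamma> x \<in> fiber K V x) \<and>
     \<gamma> \<in> borel_measurable (restrict_space borel (proj V ` K))"

definition sec_integral ::
  "('v::euclidean_space \<Rightarrow> 'a::euclidean_space) \<Rightarrow> 'a set \<Rightarrow> ('a \<Rightarrow> 'a) \<Rightarrow> 'a" where
  "sec_integral L K \<gamma> = set_lebesgue_integral (lebesgue_sub L) (proj (range L) ` K) \<gamma>"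

definition fiber_body :: "('v::euclidean_space \<Rightarrow> 'a::euclidean_space) \<Rightarrow> 'a set \<Rightarrow> 'a set" where
  "fiber_body L K = {sec_integral L K \<gamma> | \<gamma>. meas_section K (range L) \<gamma>}"

end

theory Submission
  imports Defs
begin


lemma level_lemma:
  fixes T :: "'a::euclidean_space \<Rightarrow> 'b::euclidean_space set" and \<phi> :: "'b \<Rightarrow> real"
  assumes D: "D \<in> sets borel"
    and T: "\<And>x. x \<in> D \<Longrightarrow> compact (T x) \<and> T x \<noteq> {}"
    and phi: "continuous_on UNIV \<phi>"
    and H: "\<And>C q. closed C \<Longrightarrow> {x\<in>D. \<exists>y\<in>T x \<inter> C. q \<le> \<phi> y} \<in> sets borel"
    and C: "closed C"
  shows "{x\<in>D. \<exists>y\<in>T x \<inter> C. \<forall>z\<in>T x. \<phi> z \<le> \<phi> y} \<in> sets borel"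
proof -
  have eq: "{x\<in>D. \<exists>y\<in>T x \<inter> C. \<forall>z\<in>T x. \<phi> z \<le> \<phi> y} =
    D \<inter> (\<Inter>q\<in>\<rat>. (D - {x\<in>D. \<exists>y\<in>T x \<inter> UNIV. q \<le> \<phi> y}) \<union> {x\<in>D. \<exists>y\<in>T x \<inter> C. q \<le> \<phi> y})"
  proof (intro set_eqI iffI)
    fix x assume "x \<in> {x\<in>D. \<exists>y\<in>T x \<inter> C. \<forall>z\<in>T x. \<phi> z \<le> \<phi> y}"
    show "x \<in> D \<inter> (\<Inter>q\<in>\<rat>. (D - {x\<in>D. \<exists>y\<in>T x \<inter> UNIV. q \<le> \<phi> y}) \<union> {x\<in>D. \<exists>y\<in>T x \<inter> C. q \<le> \<phi> y})"
      using \<open>x \<in> _\<close>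
    proof -
      assume a: "x \<in> {x\<in>D. \<exists>y\<in>T x \<inter> C. \<forall>z\<in>T x. \<phi> z \<le> \<phi> y}"
      then obtain y where y: "x \<in> D" "y \<in> T x \<inter> C" "\<forall>z\<in>T x. \<phi> z \<le> \<phi> y" by blast
      have "\<And>q. (\<exists>z\<in>T x. q \<le> \<phi> z) \<Longrightarrow> \<exists>y\<in>T x \<inter> C. q \<le> \<phi> y"
        using y by (meson order_trans)
      then show ?thesis using y(1) by blast
    qed
  next
    fix x assume x: "x \<in> D \<inter> (\<Inter>q\<in>\<rat>. (D - {x\<in>D. \<exists>y\<in>T x \<inter> UNIV. q \<le> \<phi> y}) \<union> {x\<in>D. \<exists>y\<in>T x \<inter> C. q \<le> \<phi> y})"
    then have xD: "x \<in> D" by blast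
    have Q: "\<And>q. q \<in> \<rat> \<Longrightarrow> \<exists>z\<in>T x. q \<le> \<phi> z \<Longrightarrow> \<exists>y\<in>T x \<inter> C. q \<le> \<phi> y"
      using x by blast
    have cS: "compact (T x \<inter> C)" using T[OF xD] C by (simp add: compact_Int_closed)
    obtain z0 where z0: "z0 \<in> T x" using T[OF xD] by blast
    have "\<exists>q\<in>\<rat>. q \<le> \<phi> z0"
      by (rule bexI[of _ "of_int \<lfloor>\<phi> z0\<rfloor>"]) (auto simp: of_int_floor_le)
    then have ne: "T x \<inter> C \<noteq> {}" using Q z0 by blast
    obtain y0 where y0: "y0 \<in> T x \<inter> C" "\<And>y. y \<in> T x \<inter> C \<Longrightarrow> \<phi> y \<le> \<phi> y0"
      using continuous_attains_sup[OF cS ne continuous_on_subset[OF phi]] by blast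
    have "\<forall>z\<in>T x. \<phi> z \<le> \<phi> y0"
    proof (rule ccontr)
      assume "\<not> ?thesis"
      then obtain z where z: "z \<in> T x" "\<phi> y0 < \<phi> z" by force
      obtain q where q: "q \<in> \<rat>" "\<phi> y0 < q" "q < \<phi> z" using Rats_dense_in_real[OF z(2)] by blast
      then obtain y where "y \<in> T x \<inter> C" "q \<le> \<phi> y" using Q[of q] z by force
      with y0(2)[of y] q show False by linarith
    qed
    then show "x \<in> {x\<in>D. \<exists>y\<in>T x \<inter> C. \<forall>z\<in>T x. \<phi> z \<le> \<phi> y}" using xD y0 by blast
  qed
  show ?thesis
    unfolding eq
    using D H[OF C] H[OF closed_UNIV]
    by (intro sets.Int sets.countable_INT'' countable_rat sets.Un sets.Diff) auto
qed



lemma min_norm_unique: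
  fixes S :: "'a::euclidean_space set"
  assumes "convex S" "y1 \<in> S" "y2 \<in> S" "\<forall>z\<in>S. norm y1 \<le> norm z" "\<forall>z\<in>S. norm y2 \<le> norm z"
  shows "y1 = y2"
proof -
  let ?m = "(1/2) *\<^sub>R y1 + (1/2) *\<^sub>R y2"
  have m: "?m \<in> S" using assms(1-3) by (intro convexD) auto
  have e: "norm y1 = norm y2" using assms(2-5) by force
  have "norm y1 \<le> norm ?m" using assms(4) m by blast
  then have "(norm y1)^2 \<le> (norm ?m)^2" by (simp add: power_mono)
  moreover have "(norm ?m)^2 = ((norm y1)^2 + 2 * (y1 \<bullet> y2) + (norm y2)^2) / 4"
    by (simp add: power2_norm_eq_inner inner_add_left inner_add_right inner_commute algebra_simps)
  moreover have "(norm (y1 - y2))^2 = (norm y1)^2 - 2 * (y1 \<bullet> y2) + (norm y2)^2"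
    by (simp add: power2_norm_eq_inner inner_diff_left inner_diff_right inner_commute algebra_simps)
  ultimately have "(norm (y1 - y2))^2 \<le> 0" using e by simp
  then show ?thesis by simp
qed

lemma selection:
  fixes G :: "('a::euclidean_space \<times> 'a) set" and u :: 'a
  assumes G: "compact G" and cvx: "\<And>x. x \<in> fst ` G \<Longrightarrow> convex {y. (x,y) \<in> G}"
  obtains \<sigma> where "\<sigma> \<in> borel_measurable borel"
    "\<And>x. x \<in> fst ` G \<Longrightarrow> (x, \<sigma> x) \<in> G \<and> (\<forall>z. (x,z) \<in> G \<longrightarrow> u \<bullet> z \<le> u \<bullet> \<sigma> x)"
proof -
  define D where "D = fst ` G"
  define T where "T x = {y. (x,y) \<in> G}" for x
  have cD: "compact D" unfolding D_def by (intro compact_continuous_image G continuous_intros)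
  then have Db: "D \<in> sets borel" by (simp add: compact_imp_closed)
  have Tc: "compact (T x)" for x
  proof -
    have "T x = snd ` (G \<inter> ({x} \<times> UNIV))" unfolding T_def by force
    moreover have "compact (G \<inter> ({x} \<times> UNIV))" by (intro compact_Int_closed G closed_Times) auto
    moreover have "compact (snd ` (G \<inter> ({x} \<times> UNIV)))"
      by (intro compact_continuous_image continuous_intros) fact
    ultimately show ?thesis by simp
  qed
  have Tne: "x \<in> D \<Longrightarrow> T x \<noteq> {}" for x unfolding D_def T_def by force
  have H1: "{x\<in>D. \<exists>y\<in>T x \<inter> C. q \<le> u \<bullet> y} \<in> sets borel" if "closed C" for C q
  proof -
    have "{x\<in>D. \<exists>y\<in>T x \<inter> C. q \<le> u \<bullet> y} = fst ` (G \<inter> (UNIV \<times> (C \<inter> {y. q \<le> u \<bullet> y})))"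
      unfolding D_def T_def by force
    moreover have "compact (G \<inter> (UNIV \<times> (C \<inter> {y. q \<le> u \<bullet> y})))"
      using that by (intro compact_Int_closed G closed_Times closed_Int closed_halfspace_ge) auto
    then have "compact (fst ` (G \<inter> (UNIV \<times> (C \<inter> {y. q \<le> u \<bullet> y}))))"
      by (intro compact_continuous_image continuous_intros)
    ultimately show ?thesis by (simp add: compact_imp_closed)
  qed
  define A where "A x = {y\<in>T x. \<forall>z\<in>T x. u \<bullet> z \<le> u \<bullet> y}" for x
  have R1: "{x\<in>D. \<exists>y\<in>A x \<inter> C. True} \<in> sets borel" if "closed C" for C
  proof -
    have "{x\<in>D. \<exists>y\<in>T x \<inter> C. \<forall>z\<in>T x. u \<bullet> z \<le> u \<bullet> y} \<in> sets borel"
      by (rule level_lemma[OF Db _ _ H1 that]) (auto simp: Tc Tne continuous_on_inner continuous_on_const continuous_on_id)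
    moreover have "{x\<in>D. \<exists>y\<in>A x \<inter> C. True} = {x\<in>D. \<exists>y\<in>T x \<inter> C. \<forall>z\<in>T x. u \<bullet> z \<le> u \<bullet> y}"
      unfolding A_def by blast
    ultimately show ?thesis by simp
  qed
  have Ane: "A x \<noteq> {}" if xD: "x \<in> D" for x
  proof -
    obtain y where "y \<in> T x" "\<forall>z\<in>T x. u \<bullet> z \<le> u \<bullet> y"
      using continuous_attains_sup[OF Tc Tne[OF xD], of "\<lambda>y. u \<bullet> y"]
        continuous_on_inner[OF continuous_on_const continuous_on_id, of "T x" u] by blast
    then show ?thesis unfolding A_def by blast
  qed
  have Aeq: "A x = T x \<inter> {y. u \<bullet> y0 \<le> u \<bullet> y}" if "y0 \<in> A x" for x y0
    using that unfolding A_def by (auto intro: order_trans)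
  have Ac: "compact (A x)" if xD: "x \<in> D" for x
  proof -
    obtain y0 where "y0 \<in> A x" using Ane[OF xD] by blast
    then show ?thesis using Aeq[of y0 x] by (simp add: compact_Int_closed Tc closed_halfspace_ge)
  qed
  have Acvx: "convex (A x)" if xD: "x \<in> D" for x
  proof -
    obtain y0 where "y0 \<in> A x" using Ane[OF xD] by blast
    moreover have "convex (T x)" using cvx xD unfolding D_def T_def by blast
    ultimately show ?thesis using Aeq[of y0 x] by (simp add: convex_Int convex_halfspace_ge)
  qed
  have H2: "{x\<in>D. \<exists>y\<in>A x \<inter> C. q \<le> - norm y} \<in> sets borel" if "closed C" for C q
  proof -
    have "closed (C \<inter> {y. q \<le> - norm y})"
      using that by (intro closed_Int closed_Collect_le) (auto intro: continuous_intros)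
    from R1[OF this] show ?thesis by (rule back_subst) auto
  qed
  have R2: "{x\<in>D. \<exists>y\<in>A x \<inter> C. \<forall>z\<in>A x. - norm z \<le> - norm y} \<in> sets borel" if "closed C" for C
    by (rule level_lemma[OF Db _ _ H2 that]) (auto simp: Ac Ane intro: continuous_intros)
  define \<sigma> where "\<sigma> x = (if x \<in> D then (SOME y. y \<in> A x \<and> (\<forall>z\<in>A x. norm y \<le> norm z)) else 0)" for x
  have \<sigma>: "\<sigma> x \<in> A x \<and> (\<forall>z\<in>A x. norm (\<sigma> x) \<le> norm z)" if xD: "x \<in> D" for x
  proof -
    have "\<exists>y. y \<in> A x \<and> (\<forall>z\<in>A x. norm y \<le> norm z)"
      using continuous_attains_inf[OF Ac[OF xD] Ane[OF xD], of norm]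
        continuous_on_norm_id[of "A x"] by blast
    then have "(SOME y. y \<in> A x \<and> (\<forall>z\<in>A x. norm y \<le> norm z)) \<in> A x \<and>
      (\<forall>z\<in>A x. norm (SOME y. y \<in> A x \<and> (\<forall>z\<in>A x. norm y \<le> norm z)) \<le> norm z)"
      by (rule someI_ex)
    then show ?thesis unfolding \<sigma>_def using xD by simp
  qed
  have pre: "\<sigma> -` C \<in> sets borel" if "closed C" for C
  proof -
    have "\<sigma> -` C = {x\<in>D. \<exists>y\<in>A x \<inter> C. \<forall>z\<in>A x. - norm z \<le> - norm y} \<union> (if 0 \<in> C then - D else {})"
    proof (intro set_eqI iffI)
      fix x assume "x \<in> \<sigma> -` C"
      then show "x \<in> {x\<in>D. \<exists>y\<in>A x \<inter> C. \<forall>z\<in>A x. - norm z \<le> - norm y} \<union> (if 0 \<in> C then - D else {})"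
      proof (cases "x \<in> D")
        case True
        then show ?thesis using \<sigma>[OF True] \<open>x \<in> \<sigma> -` C\<close> by force
      next
        case False
        then have "\<sigma> x = 0" by (simp add: \<sigma>_def)
        then show ?thesis using False \<open>x \<in> \<sigma> -` C\<close> by auto
      qed
    next
      fix x assume x: "x \<in> {x\<in>D. \<exists>y\<in>A x \<inter> C. \<forall>z\<in>A x. - norm z \<le> - norm y} \<union> (if 0 \<in> C then - D else {})"
      show "x \<in> \<sigma> -` C"
      proof (cases "x \<in> D")
        case True
        then obtain y where y: "y \<in> A x \<inter> C" "\<forall>z\<in>A x. norm y \<le> norm z" using x by (auto split: if_splits)
        have "y = \<sigma> x" using min_norm_unique[OF Acvx[OF True], of y "\<sigma> x"] y \<sigma>[OF True] by blast
        then show ?thesis using y by auto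
      next
        case False
        then show ?thesis using x by (auto simp: \<sigma>_def split: if_splits)
      qed
    qed
    then show ?thesis using R2[OF that] Db by auto
  qed
  have "\<sigma> \<in> borel_measurable borel"
  proof (rule borel_measurableI)
    fix S :: "'a set" assume "open S"
    then have "\<sigma> -` (- S) \<in> sets borel" by (intro pre) auto
    then have "UNIV - \<sigma> -` (- S) \<in> sets borel" by auto
    moreover have "UNIV - \<sigma> -` (- S) = \<sigma> -` S \<inter> space borel" by auto
    ultimately show "\<sigma> -` S \<inter> space borel \<in> sets borel" by simp
  qed
  moreover have "(x, \<sigma> x) \<in> G \<and> (\<forall>z. (x,z) \<in> G \<longrightarrow> u \<bullet> z \<le> u \<bullet> \<sigma> x)" if "x \<in> fst ` G" for x
    using \<sigma>[of x] that unfolding D_def A_def T_def by auto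
  ultimately show ?thesis using that by blast
qed



lemma proj_char:
  fixes V :: "'a::euclidean_space set"
  assumes "subspace V" "v \<in> V" "z - v \<in> orthogonal_comp V"
  shows "proj V z = v"
  unfolding proj_def
proof (rule the_equality)
  show "v \<in> V \<and> z - v \<in> orthogonal_comp V" using assms by blast
next
  fix v' assume v': "v' \<in> V \<and> z - v' \<in> orthogonal_comp V"
  have "v - v' \<in> V" using assms v' by (simp add: subspace_diff)
  moreover have "(z - v') - (z - v) \<in> orthogonal_comp V"
    by (rule subspace_diff[OF subspace_orthogonal_comp]) (use assms v' in auto)
  then have "v - v' \<in> orthogonal_comp V" by simp
  ultimately have "v - v' \<in> V \<inter> orthogonal_comp V" by blast
  then show "v' = v" using orthogonal_Int_0[OF assms(1)] by auto
qed

lemma proj_in: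
  fixes V :: "'a::euclidean_space set"
  assumes "subspace V"
  shows "proj V z \<in> V \<and> z - proj V z \<in> orthogonal_comp V"
proof -
  obtain y w where y: "y \<in> span V" "\<And>w'. w' \<in> span V \<Longrightarrow> orthogonal w w'" "z = y + w"
    using orthogonal_subspace_decomp_exists[of V z] by blast
  have sV: "span V = V" using assms by (simp add: span_eq_iff)
  have "w \<in> orthogonal_comp V"
    using y(2) sV unfolding orthogonal_comp_def by (auto simp: orthogonal_commute)
  then have "z - y \<in> orthogonal_comp V" using y(3) by simp
  then have "proj V z = y" using proj_char[OF assms] y(1) sV by simp
  then show ?thesis using \<open>z - y \<in> orthogonal_comp V\<close> y(1) sV by simp
qed

lemma orth_inner: "x \<in> V \<Longrightarrow> y \<in> orthogonal_comp V \<Longrightarrow> x \<bullet> y = 0"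
  unfolding orthogonal_comp_def orthogonal_def by blast

lemma orth_norms:
  fixes x y :: "'a::euclidean_space"
  assumes "x \<bullet> y = 0"
  shows "(norm (x + y))^2 = (norm x)^2 + (norm y)^2"
  using assms by (simp add: power2_norm_eq_inner inner_add_left inner_add_right inner_commute)

lemma orth_le:
  fixes x y :: "'a::euclidean_space"
  assumes "x \<bullet> y = 0"
  shows "norm y \<le> norm (x + y)" "norm x \<le> norm (x + y)"
proof -
  have e: "(norm (x + y))^2 = (norm x)^2 + (norm y)^2" by (rule orth_norms[OF assms])
  show "norm y \<le> norm (x + y)" by (rule power2_le_imp_le) (use e in simp_all)
  show "norm x \<le> norm (x + y)" by (rule power2_le_imp_le) (use e in simp_all)
qed



theorem mainTheorem6:
  fixes K :: "'a::euclidean_space set"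
    and L :: "'v::euclidean_space \<Rightarrow> 'a"
  assumes "convex K" and "compact K" and "K \<noteq> {}"
    and "linear L" and "\<And>t. norm (L t) = norm t"
  shows "\<forall>u \<in> orthogonal_comp (range L).
           (\<forall>y \<in> face (fiber_body L K) u. \<exists>\<gamma>.
              meas_section K (range L) \<gamma> \<and> sec_integral L K \<gamma> = y \<and>
              (\<forall>x \<in> proj (range L) ` K. \<gamma> x \<in> face (fiber K (range L) x) u))
         \<and> face (fiber_body L K) u =
             {sec_integral L K \<gamma> | \<gamma>. meas_section K (range L) \<gamma> \<and>
                (\<forall>x \<in> proj (range L) ` K. \<gamma> x \<in> face (fiber K (range L) x) u)}"
proof -
  define V where "V = range L"
  define W where "W = orthogonal_comp V"
  define D where "D = proj V ` K"
  define G where "G = {(x,y). x \<in> V \<and> y \<in> W \<and> x + y \<in> K}"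
  define M where "M = lebesgue_sub L"
  have subV: "subspace V" unfolding V_def by (rule linear_subspace_image[OF assms(4) subspace_UNIV])
  have subW: "subspace W" unfolding W_def by (rule subspace_orthogonal_comp)
  have DG: "D = fst ` G"
  proof (intro set_eqI iffI)
    fix x assume "x \<in> D"
    then obtain z where z: "z \<in> K" "x = proj V z" unfolding D_def by blast
    then have "(x, z - x) \<in> G" using proj_in[OF subV, of z] unfolding G_def W_def by auto
    then show "x \<in> fst ` G" by force
  next
    fix x assume "x \<in> fst ` G"
    then obtain y where y: "x \<in> V" "y \<in> W" "x + y \<in> K" unfolding G_def by auto
    have "proj V (x + y) = x" using proj_char[OF subV y(1)] y(2) unfolding W_def by simp
    then show "x \<in> D" unfolding D_def using y(3) by force
  qed
  have fibG: "fiber K V x = {y. (x,y) \<in> G}" if "x \<in> V" for x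
    using that unfolding fiber_def G_def W_def by auto
  have DV: "D \<subseteq> V" unfolding DG G_def by auto
  obtain R where R: "\<And>z. z \<in> K \<Longrightarrow> norm z \<le> R"
    using compact_imp_bounded[OF assms(2)] unfolding bounded_iff by blast
  have Gb: "norm x \<le> R \<and> norm y \<le> R" if "(x,y) \<in> G" for x y
  proof -
    have xy: "x \<in> V" "y \<in> W" "x + y \<in> K" using that unfolding G_def by auto
    have "x \<bullet> y = 0" using orth_inner[OF xy(1)] xy(2) unfolding W_def by blast
    then show ?thesis using orth_le[of x y] R[OF xy(3)] by linarith
  qed
  have cG: "compact G"
    unfolding compact_eq_bounded_closed
  proof (intro conjI)
    show "bounded G" unfolding bounded_iff
    proof (intro exI ballI)
      fix p assume "p \<in> G"
      then obtain x y where "p = (x,y)" "(x,y) \<in> G" by (cases p) auto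
      then show "norm p \<le> R + R" using Gb[of x y] norm_Pair_le[of x y] by simp
    qed
    have "G = (V \<times> W) \<inter> (\<lambda>p. fst p + snd p) -` K" unfolding G_def by auto
    moreover have "closed ((\<lambda>p. fst p + snd p) -` K)"
      by (intro continuous_closed_vimage compact_imp_closed assms(2)) (auto intro: continuous_intros)
    ultimately show "closed G"
      using closed_subspace[OF subV] closed_subspace[OF subW] by (simp add: closed_Int closed_Times)
  qed
  have cvx: "convex {y. (x,y) \<in> G}" if "x \<in> fst ` G" for x
    unfolding convex_def
  proof (intro ballI allI impI)
    fix y1 y2 :: 'a and a b :: real
    assume y: "y1 \<in> {y. (x,y) \<in> G}" "y2 \<in> {y. (x,y) \<in> G}" and ab: "0 \<le> a" "0 \<le> b" "a + b = 1"
    then have y': "x \<in> V" "y1 \<in> W" "y2 \<in> W" "x + y1 \<in> K" "x + y2 \<in> K" unfolding G_def by auto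
    have "a *\<^sub>R y1 + b *\<^sub>R y2 \<in> W" using subW y' by (simp add: subspace_add subspace_scale)
    moreover have "x + (a *\<^sub>R y1 + b *\<^sub>R y2) = a *\<^sub>R (x + y1) + b *\<^sub>R (x + y2)"
      using ab(3) by (simp add: algebra_simps) (metis scaleR_add_left scaleR_one)
    moreover have "a *\<^sub>R (x + y1) + b *\<^sub>R (x + y2) \<in> K"
      using assms(1) y' ab by (intro convexD) auto
    ultimately show "a *\<^sub>R y1 + b *\<^sub>R y2 \<in> {y. (x,y) \<in> G}" using y' unfolding G_def by auto
  qed
  have contL: "continuous_on UNIV L" using assms(4) by (simp add: linear_continuous_on linear_conv_bounded_linear)
  have Lm: "L \<in> measurable lborel borel" using borel_measurable_continuous_onI[OF contL] by simp
  have sM: "sets M = sets borel" unfolding M_def lebesgue_sub_def by simp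
  have spM: "space M = UNIV" unfolding M_def lebesgue_sub_def by simp
  have cD: "compact D" unfolding DG by (intro compact_continuous_image cG continuous_intros)
  have Db: "D \<in> sets borel" using cD by (simp add: compact_imp_closed)
  have finD: "emeasure M D < \<infinity>"
  proof -
    have "emeasure M D = emeasure lborel (L -` D \<inter> space lborel)"
      unfolding M_def lebesgue_sub_def by (rule emeasure_distr[OF Lm Db])
    moreover have "bounded (L -` D \<inter> space lborel)" unfolding bounded_iff
    proof (intro exI ballI)
      fix t assume "t \<in> L -` D \<inter> space lborel"
      then have "L t \<in> fst ` G" using DG by auto
      then show "norm t \<le> R" using Gb assms(5)[of t] by force
    qed
    ultimately show ?thesis using emeasure_bounded_finite by simp
  qed
  show ?thesis
    unfolding V_def[symmetric] D_def[symmetric] W_def[symmetric]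
  proof (intro ballI)
    fix u assume "u \<in> W"
    obtain \<sigma> where \<sigma>m: "\<sigma> \<in> borel_measurable borel"
      and \<sigma>: "\<And>x. x \<in> fst ` G \<Longrightarrow> (x, \<sigma> x) \<in> G \<and> (\<forall>z. (x,z) \<in> G \<longrightarrow> u \<bullet> z \<le> u \<bullet> \<sigma> x)"
      using selection[OF cG cvx, of u] by blast
    have msD: "meas_section K V \<gamma> \<longleftrightarrow> (\<forall>x\<in>D. \<gamma> x \<in> fiber K V x) \<and> \<gamma> \<in> borel_measurable (restrict_space borel D)" for \<gamma>
      unfolding meas_section_def D_def by simp
    have secG: "(x, \<gamma> x) \<in> G" if "meas_section K V \<gamma>" "x \<in> D" for \<gamma> x
      using that fibG[of x] DV unfolding msD by auto
    have secM: "(\<lambda>x. indicator D x *\<^sub>R \<gamma> x) \<in> borel_measurable M" if "meas_section K V \<gamma>" for \<gamma>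
    proof -
      have "\<gamma> \<in> borel_measurable (restrict_space borel D)" using that unfolding msD by blast
      then have "(\<lambda>x. indicator D x *\<^sub>R \<gamma> x) \<in> borel_measurable borel"
        using borel_measurable_restrict_space_iff[of D borel \<gamma>] Db by simp
      then show ?thesis using measurable_cong_sets[OF sM refl] by blast
    qed
    have secI: "integrable M (\<lambda>x. indicator D x *\<^sub>R \<gamma> x)" if "meas_section K V \<gamma>" for \<gamma>
    proof (rule integrableI_bounded_set[where A=D and B=R])
      show "D \<in> sets M" using Db sM by simp
      show "(\<lambda>x. indicator D x *\<^sub>R \<gamma> x) \<in> borel_measurable M" by (rule secM[OF that])
      show "emeasure M D < \<infinity>" by (rule finD)
      show "AE x in M. x \<in> D \<longrightarrow> norm (indicator D x *\<^sub>R \<gamma> x) \<le> R"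
        using Gb secG[OF that] by (intro AE_I2) auto
      show "AE x in M. x \<notin> D \<longrightarrow> indicator D x *\<^sub>R \<gamma> x = 0" by (intro AE_I2) auto
    qed
    have secInt: "sec_integral L K \<gamma> = integral\<^sup>L M (\<lambda>x. indicator D x *\<^sub>R \<gamma> x)" for \<gamma>
      by (simp add: sec_integral_def set_lebesgue_integral_def M_def V_def D_def)
    have hI: "integrable M (\<lambda>x. indicator D x * (u \<bullet> \<gamma> x))" if "meas_section K V \<gamma>" for \<gamma>
      using integrable_inner_right[OF secI[OF that], of u] by simp
    have secU: "u \<bullet> sec_integral L K \<gamma> = (\<integral>x. indicator D x * (u \<bullet> \<gamma> x) \<partial>M)" if "meas_section K V \<gamma>" for \<gamma>
      unfolding secInt using integral_inner_right[of u M "\<lambda>x. indicator D x *\<^sub>R \<gamma> x"] secI[OF that] by simp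
    have \<sigma>sec: "meas_section K V \<sigma>"
      unfolding msD
    proof
      show "\<forall>x\<in>D. \<sigma> x \<in> fiber K V x"
      proof
        fix x assume x: "x \<in> D"
        then have "x \<in> V" using DV by auto
        then show "\<sigma> x \<in> fiber K V x" using fibG[of x] \<sigma>[of x] x DG by auto
      qed
      show "\<sigma> \<in> borel_measurable (restrict_space borel D)" by (rule measurable_restrict_space1[OF \<sigma>m])
    qed
    have le: "u \<bullet> sec_integral L K \<gamma> \<le> u \<bullet> sec_integral L K \<sigma>" if "meas_section K V \<gamma>" for \<gamma>
      unfolding secU[OF that] secU[OF \<sigma>sec]
    proof (rule integral_mono[OF hI[OF that] hI[OF \<sigma>sec]])
      fix x show "indicator D x * (u \<bullet> \<gamma> x) \<le> indicator D x * (u \<bullet> \<sigma> x)"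
        using \<sigma>[of x] secG[OF that, of x] DG by (cases "x \<in> D") auto
    qed
    have fbV: "fiber_body L K = {sec_integral L K \<gamma> | \<gamma>. meas_section K V \<gamma>}"
      unfolding fiber_body_def V_def by simp
    have supS: "support_fun (fiber_body L K) u = u \<bullet> sec_integral L K \<sigma>"
      unfolding support_fun_def
    proof (rule cSup_eq_maximum)
      show "u \<bullet> sec_integral L K \<sigma> \<in> (\<bullet>) u ` fiber_body L K" using \<sigma>sec unfolding fbV by blast
      fix t assume "t \<in> (\<bullet>) u ` fiber_body L K"
      then show "t \<le> u \<bullet> sec_integral L K \<sigma>" using le unfolding fbV by auto
    qed
    have faceS: "face (fiber_body L K) u = {y \<in> fiber_body L K. u \<bullet> y = u \<bullet> sec_integral L K \<sigma>}"
      unfolding face_def supS ..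
    have faceF: "face (fiber K V x) u = {y \<in> fiber K V x. u \<bullet> y = u \<bullet> \<sigma> x}" if xD: "x \<in> D" for x
    proof -
      have fx: "fiber K V x = {y. (x,y) \<in> G}" using fibG DV xD by auto
      have "support_fun (fiber K V x) u = u \<bullet> \<sigma> x"
        unfolding support_fun_def
      proof (rule cSup_eq_maximum)
        show "u \<bullet> \<sigma> x \<in> (\<bullet>) u ` fiber K V x" using \<sigma>[of x] xD DG fx by auto
        fix t assume "t \<in> (\<bullet>) u ` fiber K V x"
        then show "t \<le> u \<bullet> \<sigma> x" using \<sigma>[of x] xD DG fx by auto
      qed
      then show ?thesis unfolding face_def by simp
    qed
    have part1: "\<exists>\<gamma>. meas_section K V \<gamma> \<and> sec_integral L K \<gamma> = y \<and> (\<forall>x\<in>D. \<gamma> x \<in> face (fiber K V x) u)"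
      if yF: "y \<in> face (fiber_body L K) u" for y
    proof -
      obtain \<gamma> where \<gamma>: "meas_section K V \<gamma>" "y = sec_integral L K \<gamma>"
        and eqU: "u \<bullet> y = u \<bullet> sec_integral L K \<sigma>"
        using yF[unfolded faceS] unfolding fbV by blast
      define f where "f x = indicator D x * (u \<bullet> \<sigma> x) - indicator D x * (u \<bullet> \<gamma> x)" for x
      have fI: "integrable M f" unfolding f_def using hI[OF \<gamma>(1)] hI[OF \<sigma>sec] by auto
      have "integral\<^sup>L M f = 0"
        unfolding f_def using hI[OF \<gamma>(1)] hI[OF \<sigma>sec] secU[OF \<gamma>(1)] secU[OF \<sigma>sec] eqU \<gamma>(2) by simp
      moreover have "AE x in M. 0 \<le> f x"
      proof (intro AE_I2)
        fix x show "0 \<le> f x"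
          unfolding f_def using \<sigma>[of x] secG[OF \<gamma>(1), of x] DG by (cases "x \<in> D") auto
      qed
      ultimately have AEf: "AE x in M. f x = 0" using integral_nonneg_eq_0_iff_AE[OF fI] by blast
      define \<gamma>' where "\<gamma>' x = (if u \<bullet> \<gamma> x = u \<bullet> \<sigma> x then \<gamma> x else \<sigma> x)" for x
      have \<gamma>m: "\<gamma> \<in> borel_measurable (restrict_space borel D)" using \<gamma>(1) unfolding msD by blast
      have \<sigma>m': "\<sigma> \<in> borel_measurable (restrict_space borel D)" by (rule measurable_restrict_space1[OF \<sigma>m])
      have \<gamma>'sec: "meas_section K V \<gamma>'"
        unfolding msD
      proof
        show "\<forall>x\<in>D. \<gamma>' x \<in> fiber K V x"
          using \<gamma>(1) \<sigma>sec unfolding msD \<gamma>'_def by auto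
        have "{x \<in> space (restrict_space borel D). u \<bullet> \<gamma> x = u \<bullet> \<sigma> x} \<in> sets (restrict_space borel D)"
          by (intro borel_measurable_eq borel_measurable_inner borel_measurable_const \<gamma>m \<sigma>m')
        then show "\<gamma>' \<in> borel_measurable (restrict_space borel D)"
          unfolding \<gamma>'_def by (intro measurable_If \<gamma>m \<sigma>m')
      qed
      have "sec_integral L K \<gamma>' = sec_integral L K \<gamma>"
        unfolding secInt
      proof (rule integral_cong_AE[OF secM[OF \<gamma>'sec] secM[OF \<gamma>(1)]])
        show "AE x in M. indicator D x *\<^sub>R \<gamma>' x = indicator D x *\<^sub>R \<gamma> x"
          using AEf by (rule AE_mp) (auto simp: f_def \<gamma>'_def indicator_def)
      qed
      moreover have "\<forall>x\<in>D. \<gamma>' x \<in> face (fiber K V x) u"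
        using faceF \<gamma>(1) \<sigma>sec unfolding msD \<gamma>'_def by auto
      ultimately show ?thesis using \<gamma>'sec \<gamma>(2) by auto
    qed
    have part2: "y \<in> face (fiber_body L K) u" if "meas_section K V \<gamma>" "\<forall>x\<in>D. \<gamma> x \<in> face (fiber K V x) u"
      and "y = sec_integral L K \<gamma>" for y \<gamma>
    proof -
      have "u \<bullet> sec_integral L K \<gamma> = u \<bullet> sec_integral L K \<sigma>"
        unfolding secU[OF that(1)] secU[OF \<sigma>sec]
      proof (rule Bochner_Integration.integral_cong[OF refl])
        fix x show "indicator D x * (u \<bullet> \<gamma> x) = indicator D x * (u \<bullet> \<sigma> x)"
          using that(2) faceF[of x] by (cases "x \<in> D") auto
      qed
      moreover have "y \<in> fiber_body L K" using that(1,3) unfolding fbV by blast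
      ultimately show ?thesis unfolding faceS using that(3) by simp
    qed
    show "(\<forall>y\<in>face (fiber_body L K) u. \<exists>\<gamma>. meas_section K V \<gamma> \<and> sec_integral L K \<gamma> = y \<and>
            (\<forall>x\<in>D. \<gamma> x \<in> face (fiber K V x) u)) \<and>
          face (fiber_body L K) u =
            {sec_integral L K \<gamma> |\<gamma>. meas_section K V \<gamma> \<and> (\<forall>x\<in>D. \<gamma> x \<in> face (fiber K V x) u)}"
      using part1 part2 by blast
  qed
qed


end
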